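(* Let $\alpha_1,\dots,\alpha_n,\beta,\gamma>0$, let $G_{\alpha_1},\dots,G_{\alpha_n}$ be independent gamma random variables with $G_{\alpha_i}$ having density $x^{\alpha_i-1}e^{-x}/\Gamma(\alpha_i)$, and let $H_{\beta,\gamma}=G_\beta/G_\gamma$ be a second kind beta random variable (with $G_\beta,G_\gamma$ independent gamma variables of shapes $\beta,\gamma$ and unit scale), independent of the $G_{\alpha_i}$. Define $(X_1,\dots,X_n)=(G_{\alpha_1}H_{\beta,\gamma},\dots,G_{\alpha_n}H_{\beta,\gamma})$ and $\tilde\alpha=\sum_{j=1}^n\alpha_j$. Then $S_n=X_1+\dots+X_n$ has the same distribution as $G_{\tilde\alpha}H_{\beta,\gamma}$ (with $G_{\tilde\alpha}$ gamma of shape $\tilde\alpha$ independent of $H_{\beta,\gamma}$), and its pdf is $$f_{S_n}(x)=\frac{\Gamma(\tilde\alpha+\gamma)\Gamma(\beta+\gamma)}{\Gamma(\tilde\alpha)\Gamma(\beta)\Gamma(\gamma)}\,x^{\tilde\alpha-1}\,U(\tilde\alpha+\gamma,\tilde\alpha-\beta+1,x),\qquad x>0,$$ and $f_{S_n}(x)=0$ for $x<0$.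
   Context: $U(a,b,z)$ is the confluent hypergeometric (Kummer) function of the second kind, $U(a,b,z)=\frac{1}{\Gamma(a)}\int_0^\infty e^{-zt}t^{a-1}(1+t)^{b-a-1}\,dt$ for $a,z>0$. *)

theory Defs
  imports "HOL-Probability.Probability"
begin

definition gamma_density :: "real \<Rightarrow> real \<Rightarrow> real" where
  "gamma_density a x = (if 0 < x then x powr (a - 1) * exp (- x) / Gamma a else 0)"

text \<open>Kummer (confluent hypergeometric) function of the second kind, integral representation
  valid for a > 0, z > 0.\<close>
definition kummerU :: "real \<Rightarrow> real \<Rightarrow> real \<Rightarrow> real" where
  "kummerU a b z = (1 / Gamma a) *
     (LBINT t:{0<..}. exp (- z * t) * t powr (a - 1) * (1 + t) powr (b - a - 1))"

end

theory Submission
  imports Defs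
begin

lemma gamma_scaled:
  fixes s c :: real
  assumes s: "0 < s" and c: "0 < c"
  shows "(\<integral>\<^sup>+b. ennreal (b powr (s-1) * exp (-(c*b))) * indicator {0<..} b \<partial>lborel)
         = ennreal (Gamma s / c powr s)"
proof -
  have I: "(\<integral>\<^sup>+t. ennreal (t powr (s-1) / exp t) * indicator {0..} t \<partial>lborel) = ennreal (Gamma s)"
    by (rule nn_integral_has_integral_lebesgue'[OF _ Gamma_integral_real[OF s]]) auto
  have "(\<integral>\<^sup>+t. ennreal (t powr (s-1) / exp t) * indicator {0..} t \<partial>lborel)
      = ennreal c * (\<integral>\<^sup>+b. ennreal ((c*b) powr (s-1) / exp (c*b)) * indicator {0..} (c*b) \<partial>lborel)"
    using nn_integral_real_affine[of "\<lambda>t. ennreal (t powr (s-1) / exp t) * indicator {0..} t" c 0] c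
    by simp
  also have "(\<lambda>b. ennreal ((c*b) powr (s-1) / exp (c*b)) * indicator {0..} (c*b))
           = (\<lambda>b. ennreal (c powr (s-1)) * (ennreal (b powr (s-1) * exp (-(c*b))) * indicator {0<..} b))"
  proof
    fix b :: real
    show "ennreal ((c*b) powr (s-1) / exp (c*b)) * indicator {0..} (c*b)
        = ennreal (c powr (s-1)) * (ennreal (b powr (s-1) * exp (-(c*b))) * indicator {0<..} b)"
    proof (cases "b > 0")
      case True
      have "(c*b) powr (s-1) / exp (c*b) = c powr (s-1) * (b powr (s-1) * exp (-(c*b)))"
        using c True by (simp add: powr_mult exp_minus field_simps)
      then show ?thesis using True c by (simp add: ennreal_mult)
    next
      case False
      then show ?thesis using c by (auto simp: indicator_def zero_le_mult_iff)
    qed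
  qed
  also have "ennreal c * (\<integral>\<^sup>+b. ennreal (c powr (s-1)) * (ennreal (b powr (s-1) * exp (-(c*b))) * indicator {0<..} b) \<partial>lborel)
      = ennreal (c powr s) * (\<integral>\<^sup>+b. ennreal (b powr (s-1) * exp (-(c*b))) * indicator {0<..} b \<partial>lborel)"
  proof -
    have e: "c * c powr (s-1) = c powr s"
      using c by (simp add: powr_diff)
    show ?thesis
      apply (subst nn_integral_cmult)
       apply simp
      apply (subst mult.assoc[symmetric])
      apply (subst ennreal_mult[symmetric])
      using c e by auto
  qed
  finally have "ennreal (c powr s) * (\<integral>\<^sup>+b. ennreal (b powr (s-1) * exp (-(c*b))) * indicator {0<..} b \<partial>lborel) = ennreal (Gamma s)"
    using I by simp
  then have "ennreal (1 / c powr s) * (ennreal (c powr s) * (\<integral>\<^sup>+b. ennreal (b powr (s-1) * exp (-(c*b))) * indicator {0<..} b \<partial>lborel)) = ennreal (1 / c powr s) * ennreal (Gamma s)"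
    by simp
  also have "ennreal (1 / c powr s) * ennreal (Gamma s) = ennreal (Gamma s / c powr s)"
    using c s by (simp add: ennreal_mult[symmetric] Gamma_real_pos less_imp_le)
  also have "ennreal (1 / c powr s) * (ennreal (c powr s) * X) = X" for X
    using c by (simp add: mult.assoc[symmetric] ennreal_mult[symmetric])
  finally show ?thesis .
qed

lemma beta_nn:
  fixes a b :: real
  assumes a: "0 < a" and b: "0 < b"
  shows "(\<integral>\<^sup>+t. ennreal (t powr (a-1) * (1-t) powr (b-1)) * indicator {0<..<1} t \<partial>lborel) = ennreal (Beta a b)"
proof -
  have "(\<integral>\<^sup>+t. ennreal (t powr (a-1) * (1-t) powr (b-1)) * indicator {0..1} t \<partial>lborel) = ennreal (Beta a b)"
    by (rule nn_integral_has_integral_lebesgue'[OF _ has_integral_Beta_real[OF a b]]) auto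
  also have "(\<lambda>t. ennreal (t powr (a-1) * (1-t) powr (b-1)) * indicator {0..1} t)
     = (\<lambda>t::real. ennreal (t powr (a-1) * (1-t) powr (b-1)) * indicator {0<..<1} t)"
    by (auto simp: indicator_def fun_eq_iff)
  finally show ?thesis .
qed

lemma gamma_conv:
  fixes a b :: real
  assumes a: "0 < a" and b: "0 < b"
  shows "(\<lambda>x. \<integral>\<^sup>+y. ennreal (gamma_density a (x-y)) * ennreal (gamma_density b y) \<partial>lborel)
       = (\<lambda>x. ennreal (gamma_density (a+b) x))"
proof
  fix x :: real
  show "(\<integral>\<^sup>+y. ennreal (gamma_density a (x-y)) * ennreal (gamma_density b y) \<partial>lborel)
       = ennreal (gamma_density (a+b) x)"
  proof (cases "0 < x")
    case False
    then have "\<And>y. ennreal (gamma_density a (x-y)) * ennreal (gamma_density b y) = 0"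
      by (auto simp: gamma_density_def)
    then have "(\<integral>\<^sup>+y. ennreal (gamma_density a (x-y)) * ennreal (gamma_density b y) \<partial>lborel) = 0"
      by (subst nn_integral_cong[where v="\<lambda>_. 0"]) (auto simp del: mult_eq_0_iff)
    then show ?thesis using False by (simp add: gamma_density_def)
  next
    case x: True
    define K where "K = exp (-x) / (Gamma a * Gamma b)"
    have K: "0 \<le> K" using a b by (simp add: K_def Gamma_real_pos less_imp_le)
    have "(\<lambda>y. ennreal (gamma_density a (x-y)) * ennreal (gamma_density b y))
       = (\<lambda>y. ennreal K * (ennreal ((x-y) powr (a-1) * y powr (b-1)) * indicator {0<..<x} y))"
    proof
      fix y
      show "ennreal (gamma_density a (x-y)) * ennreal (gamma_density b y)
         = ennreal K * (ennreal ((x-y) powr (a-1) * y powr (b-1)) * indicator {0<..<x} y)"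
      proof (cases "0 < y \<and> y < x")
        case True
        have "gamma_density a (x-y) * gamma_density b y = K * ((x-y) powr (a-1) * y powr (b-1))"
          using True by (simp add: gamma_density_def K_def exp_diff exp_minus field_simps)
        moreover have "0 \<le> gamma_density a (x-y)" "0 \<le> gamma_density b y"
          using True a b by (auto simp: gamma_density_def Gamma_real_pos less_imp_le)
        ultimately show ?thesis using True K
          by (simp add: ennreal_mult[symmetric])
      next
        case False
        then show ?thesis by (auto simp: gamma_density_def indicator_def not_less)
      qed
    qed
    then have "(\<integral>\<^sup>+y. ennreal (gamma_density a (x-y)) * ennreal (gamma_density b y) \<partial>lborel)
       = ennreal K * (\<integral>\<^sup>+y. ennreal ((x-y) powr (a-1) * y powr (b-1)) * indicator {0<..<x} y \<partial>lborel)"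
      by (simp add: nn_integral_cmult)
    also have "(\<integral>\<^sup>+y. ennreal ((x-y) powr (a-1) * y powr (b-1)) * indicator {0<..<x} y \<partial>lborel)
      = ennreal x * (\<integral>\<^sup>+t. ennreal ((x-(x*t)) powr (a-1) * (x*t) powr (b-1)) * indicator {0<..<x} (x*t) \<partial>lborel)"
      using nn_integral_real_affine[of "\<lambda>y. ennreal ((x-y) powr (a-1) * y powr (b-1)) * indicator {0<..<x} y" x 0] x
      by simp
    also have "(\<lambda>t. ennreal ((x-(x*t)) powr (a-1) * (x*t) powr (b-1)) * indicator {0<..<x} (x*t))
       = (\<lambda>t. ennreal (x powr (a+b-2)) * (ennreal (t powr (b-1) * (1-t) powr (a-1)) * indicator {0<..<1} t))"
    proof
      fix t
      show "ennreal ((x-(x*t)) powr (a-1) * (x*t) powr (b-1)) * indicator {0<..<x} (x*t)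
         = ennreal (x powr (a+b-2)) * (ennreal (t powr (b-1) * (1-t) powr (a-1)) * indicator {0<..<1} t)"
      proof (cases "0 < t \<and> t < 1")
        case True
        have "(x-(x*t)) powr (a-1) * (x*t) powr (b-1) = x powr (a+b-2) * (t powr (b-1) * (1-t) powr (a-1))"
        proof -
          have "x - x*t = x * (1-t)" by (simp add: algebra_simps)
          then have "(x-(x*t)) powr (a-1) * (x*t) powr (b-1)
              = (x powr (a-1) * x powr (b-1)) * (t powr (b-1) * (1-t) powr (a-1))"
            using True x by (simp add: powr_mult)
          also have "x powr (a-1) * x powr (b-1) = x powr (a+b-2)"
            by (simp add: powr_add[symmetric])
          finally show ?thesis .
        qed
        moreover have "x*t < x" using True x by simp
        ultimately show ?thesis using True x by (simp add: ennreal_mult[symmetric])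
      next
        case False
        then have "\<not> (0 < x*t \<and> x*t < x)" using x
          by (auto simp: zero_less_mult_iff)
        then show ?thesis using False by (auto simp: indicator_def)
      qed
    qed
    also have "(\<integral>\<^sup>+t. ennreal (x powr (a+b-2)) * (ennreal (t powr (b-1) * (1-t) powr (a-1)) * indicator {0<..<1} t) \<partial>lborel)
       = ennreal (x powr (a+b-2)) * ennreal (Beta b a)"
      by (simp add: nn_integral_cmult beta_nn[OF b a])
    moreover have Bnn: "0 \<le> Beta b a" using a b by (simp add: Beta_def Gamma_real_pos less_imp_le)
    ultimately have "(\<integral>\<^sup>+y. ennreal (gamma_density a (x-y)) * ennreal (gamma_density b y) \<partial>lborel)
       = ennreal (K * (x * (x powr (a+b-2) * Beta b a)))"
      using K x Bnn by (simp add: ennreal_mult)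
    also have "K * (x * (x powr (a+b-2) * Beta b a)) = gamma_density (a+b) x"
    proof -
      have "x * x powr (a+b-2) = x powr (a+b-1)"
        using x powr_add[of x 1 "a+b-2"] by simp
      moreover have "Beta b a = Gamma a * Gamma b / Gamma (a+b)"
        by (simp add: Beta_def add.commute mult.commute)
      moreover have "Gamma a \<noteq> 0" "Gamma b \<noteq> 0" "Gamma (a+b) \<noteq> 0"
        using Gamma_real_pos[OF a] Gamma_real_pos[OF b] Gamma_real_pos[of "a+b"] a b by linarith+
      ultimately have e: "x * x powr (a+b-2) = x powr (a+b-1)" "Beta b a = Gamma a * Gamma b / Gamma (a+b)"
        and nz: "Gamma a \<noteq> 0" "Gamma b \<noteq> 0" "Gamma (a+b) \<noteq> 0" by auto
      have "K * (x * (x powr (a+b-2) * Beta b a)) = K * (x * x powr (a+b-2)) * Beta b a"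
        by (simp add: ac_simps)
      also have "\<dots> = exp (-x) / (Gamma a * Gamma b) * x powr (a+b-1) * (Gamma a * Gamma b / Gamma (a+b))"
        unfolding e K_def ..
      also have "\<dots> = x powr (a+b-1) * exp (-x) / Gamma (a+b)"
        using nz by (simp add: field_simps)
      finally show ?thesis using x by (simp add: gamma_density_def)
    qed
    finally show ?thesis .
  qed
qed


lemma gd_nonneg: "0 < a \<Longrightarrow> 0 \<le> gamma_density a x"
  by (simp add: gamma_density_def less_imp_le)

lemma gd_meas[measurable]: "gamma_density a \<in> borel_measurable borel"
  unfolding gamma_density_def by measurable

lemma subst_identity:
  fixes a \<beta> \<gamma> x b t :: real
  assumes x: "0 < x" and b: "0 < b" and t: "0 < t"
  shows "b * ((b*t)/b * gamma_density a ((b*t)*x/b) * gamma_density \<beta> b * gamma_density \<gamma> (b*t))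
       = (x powr (a-1) / (Gamma a * Gamma \<beta> * Gamma \<gamma>)) * (t powr (a+\<gamma>-1) * exp (-(x*t)))
         * (b powr ((\<beta>+\<gamma>)-1) * exp (-((1+t)*b)))"
proof -
  have e1: "(b*t)/b = t" "(b*t)*x/b = t*x" using b by auto
  have p1: "(t*x) powr (a-1) = t powr (a-1) * x powr (a-1)" using t x by (simp add: powr_mult)
  have p2: "(b*t) powr (\<gamma>-1) = b powr (\<gamma>-1) * t powr (\<gamma>-1)" using t b by (simp add: powr_mult)
  have p3: "t * t powr (a-1) * t powr (\<gamma>-1) = t powr (a+\<gamma>-1)"
  proof -
    have "a+\<gamma>-1 = 1 + (a-1) + (\<gamma>-1)" by simp
    then have "t powr (a+\<gamma>-1) = t powr 1 * t powr (a-1) * t powr (\<gamma>-1)" by (simp only: powr_add)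
    then show ?thesis using t by simp
  qed
  have p4: "b * b powr (\<beta>-1) * b powr (\<gamma>-1) = b powr ((\<beta>+\<gamma>)-1)"
  proof -
    have "(\<beta>+\<gamma>)-1 = 1 + (\<beta>-1) + (\<gamma>-1)" by simp
    then have "b powr ((\<beta>+\<gamma>)-1) = b powr 1 * b powr (\<beta>-1) * b powr (\<gamma>-1)" by (simp only: powr_add)
    then show ?thesis using b by simp
  qed
  have p5: "exp (-(t*x)) * exp (-b) * exp (-(b*t)) = exp (-(x*t)) * exp (-((1+t)*b))"
    by (simp add: exp_add[symmetric] algebra_simps)
  have "b * ((b*t)/b * gamma_density a ((b*t)*x/b) * gamma_density \<beta> b * gamma_density \<gamma> (b*t))
     = (t * t powr (a-1) * t powr (\<gamma>-1)) * (b * b powr (\<beta>-1) * b powr (\<gamma>-1)) * x powr (a-1)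
       * (exp (-(t*x)) * exp (-b) * exp (-(b*t))) / (Gamma a * Gamma \<beta> * Gamma \<gamma>)"
    unfolding e1 using x b t by (simp add: gamma_density_def p1 p2 field_simps)
  also have "\<dots> = (x powr (a-1) / (Gamma a * Gamma \<beta> * Gamma \<gamma>)) * (t powr (a+\<gamma>-1) * exp (-(x*t)))
         * (b powr ((\<beta>+\<gamma>)-1) * exp (-((1+t)*b)))"
    unfolding p3 p4 p5 by (simp add: field_simps)
  finally show ?thesis .
qed

lemma LB:
  fixes x A e :: real
  assumes x: "0 < x" and A: "0 < A" and e: "e \<le> 0"
  shows "(\<integral>\<^sup>+t. ennreal (exp (- x*t) * t powr (A-1) * (1+t) powr e) * indicator {0<..} t \<partial>lborel)
       = ennreal (LBINT t:{0<..}. exp (- x*t) * t powr (A-1) * (1+t) powr e)"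
proof -
  define f where "f t = indicator {0<..} t * (exp (- x*t) * t powr (A-1) * (1+t) powr e)" for t :: real
  have fnn: "0 \<le> f t" for t by (simp add: f_def)
  have eq: "(\<lambda>t. ennreal (exp (- x*t) * t powr (A-1) * (1+t) powr e) * indicator {0<..} t) = (\<lambda>t. ennreal (f t))"
    by (auto simp: f_def indicator_def fun_eq_iff)
  have le: "ennreal (f t) \<le> ennreal (t powr (A-1) * exp (-(x*t))) * indicator {0<..} t" for t
  proof (cases "0 < t")
    case True
    have "(1+t) powr e \<le> 1"
    proof -
      have "1 \<le> (1+t) powr (-e)" using True e by (intro ge_one_powr_ge_zero) auto
      then show ?thesis using True by (simp add: powr_minus_divide divide_le_eq)
    qed
    then have "exp (- x*t) * t powr (A-1) * (1+t) powr e \<le> exp (- x*t) * t powr (A-1) * 1"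
      by (intro mult_left_mono) auto
    then show ?thesis using True by (simp add: f_def mult.commute)
  next
    case False then show ?thesis by (simp add: f_def)
  qed
  have fin: "(\<integral>\<^sup>+t. ennreal (f t) \<partial>lborel) < \<infinity>"
  proof -
    have "(\<integral>\<^sup>+t. ennreal (f t) \<partial>lborel) \<le> (\<integral>\<^sup>+t. ennreal (t powr (A-1) * exp (-(x*t))) * indicator {0<..} t \<partial>lborel)"
      by (intro nn_integral_mono le)
    also have "\<dots> = ennreal (Gamma A / x powr A)"
      using gamma_scaled[OF A x] by simp
    finally show ?thesis by (rule order_le_less_trans) simp
  qed
  have fm: "f \<in> borel_measurable lborel" unfolding f_def by measurable
  have int: "integrable lborel f"
    by (rule integrableI_nonneg[OF fm _ fin]) (simp add: fnn)
  have "(\<integral>\<^sup>+t. ennreal (f t) \<partial>lborel) = ennreal (integral\<^sup>L lborel f)"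
    by (rule nn_integral_eq_integral[OF int]) (simp add: fnn)
  also have "integral\<^sup>L lborel f = (LBINT t:{0<..}. exp (- x*t) * t powr (A-1) * (1+t) powr e)"
    unfolding set_lebesgue_integral_def f_def[abs_def] by simp
  finally show ?thesis using eq by simp
qed

definition fS :: "real \<Rightarrow> real \<Rightarrow> real \<Rightarrow> real \<Rightarrow> real" where
  "fS a \<beta> \<gamma> x = (if 0 < x then
      Gamma (a + \<gamma>) * Gamma (\<beta> + \<gamma>) / (Gamma a * Gamma \<beta> * Gamma \<gamma>)
      * x powr (a - 1) * kummerU (a + \<gamma>) (a - \<beta> + 1) x else 0)"

lemma Phi_nonneg:
  assumes "0 < a" "0 < \<beta>" "0 < \<gamma>"
  shows "0 \<le> c/b * gamma_density a (c*x/b) * gamma_density \<beta> b * gamma_density \<gamma> c"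
proof (cases "0 < b \<and> 0 < c")
  case True then show ?thesis using assms by (intro mult_nonneg_nonneg gd_nonneg) auto
next
  case False then show ?thesis by (auto simp: gamma_density_def)
qed

lemma kx:
  fixes a \<beta> \<gamma> x :: real
  assumes a: "0 < a" and be: "0 < \<beta>" and ga: "0 < \<gamma>"
  shows "(\<integral>\<^sup>+b. \<integral>\<^sup>+c. ennreal (c/b * gamma_density a (c*x/b) * gamma_density \<beta> b * gamma_density \<gamma> c) \<partial>lborel \<partial>lborel)
       = ennreal (fS a \<beta> \<gamma> x)"
proof (cases "0 < x")
  case False
  have "c/b * gamma_density a (c*x/b) * gamma_density \<beta> b * gamma_density \<gamma> c = 0" for b c
  proof (cases "0 < b \<and> 0 < c")
    case True
    then have "c*x/b \<le> 0" using False by (simp add: divide_nonpos_pos mult_nonneg_nonpos)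
    then show ?thesis by (simp add: gamma_density_def)
  next
    case False then show ?thesis by (auto simp: gamma_density_def)
  qed
  then have "(\<integral>\<^sup>+b. \<integral>\<^sup>+c. ennreal (c/b * gamma_density a (c*x/b) * gamma_density \<beta> b * gamma_density \<gamma> c) \<partial>lborel \<partial>lborel) = 0"
    by (simp only: ennreal_0 nn_integral_const mult_zero_left)
  then show ?thesis using False by (simp add: fS_def)
next
  case x: True
  define K where "K = x powr (a-1) / (Gamma a * Gamma \<beta> * Gamma \<gamma>)"
  have Kn: "0 \<le> K" using a be ga by (simp add: K_def)
  define P where "P t = t powr (a+\<gamma>-1) * exp (-(x*t))" for t :: real
  define Q where "Q t b = b powr ((\<beta>+\<gamma>)-1) * exp (-((1+t)*b))" for t b :: real
  define \<Phi> where "\<Phi> b c = c/b * gamma_density a (c*x/b) * gamma_density \<beta> b * gamma_density \<gamma> c" for b c :: real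
  define \<Psi> where "\<Psi> b t = ennreal K * (ennreal (P t) * indicator {0<..} t) * (ennreal (Q t b) * indicator {0<..} b)" for b t :: real
  have \<Phi>m[measurable]: "(\<lambda>c. ennreal (\<Phi> b c)) \<in> borel_measurable borel" for b
    unfolding \<Phi>_def by measurable
  have stepA: "(\<integral>\<^sup>+c. ennreal (\<Phi> b c) \<partial>lborel) = (\<integral>\<^sup>+t. \<Psi> b t \<partial>lborel)" for b
  proof (cases "0 < b")
    case b: True
    have "(\<integral>\<^sup>+c. ennreal (\<Phi> b c) \<partial>lborel) = ennreal b * (\<integral>\<^sup>+t. ennreal (\<Phi> b (b*t)) \<partial>lborel)"
      using nn_integral_real_affine[of "\<lambda>c. ennreal (\<Phi> b c)" b 0] b by simp
    also have "\<dots> = (\<integral>\<^sup>+t. ennreal b * ennreal (\<Phi> b (b*t)) \<partial>lborel)"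
      by (simp add: nn_integral_cmult)
    also have "\<dots> = (\<integral>\<^sup>+t. \<Psi> b t \<partial>lborel)"
    proof (intro nn_integral_cong)
      fix t :: real
      show "ennreal b * ennreal (\<Phi> b (b*t)) = \<Psi> b t"
      proof (cases "0 < t")
        case t: True
        have "b * \<Phi> b (b*t) = K * P t * Q t b"
          using subst_identity[OF x b t, of a \<beta> \<gamma>] unfolding \<Phi>_def K_def P_def Q_def by simp
        moreover have "0 \<le> P t" "0 \<le> Q t b" using t b by (auto simp: P_def Q_def)
        moreover have "ennreal b * ennreal (\<Phi> b (b*t)) = ennreal (b * \<Phi> b (b*t))"
          using b by (simp add: ennreal_mult')
        ultimately show ?thesis using b t Kn
          by (simp add: \<Psi>_def ennreal_mult[symmetric] mult.assoc)
      next
        case False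
        then have "b*t \<le> 0" using b by (simp add: mult_nonneg_nonpos)
        then show ?thesis using False by (simp add: \<Phi>_def \<Psi>_def gamma_density_def)
      qed
    qed
    finally show ?thesis .
  next
    case False
    then show ?thesis by (simp add: \<Phi>_def \<Psi>_def gamma_density_def)
  qed
  have "(\<integral>\<^sup>+b. \<integral>\<^sup>+c. ennreal (\<Phi> b c) \<partial>lborel \<partial>lborel) = (\<integral>\<^sup>+b. \<integral>\<^sup>+t. \<Psi> b t \<partial>lborel \<partial>lborel)"
    by (simp add: stepA)
  also have "\<dots> = (\<integral>\<^sup>+t. \<integral>\<^sup>+b. \<Psi> b t \<partial>lborel \<partial>lborel)"
    by (rule lborel_pair.Fubini'[symmetric]) (simp add: \<Psi>_def P_def Q_def)
  also have "\<dots> = (\<integral>\<^sup>+t. ennreal (K * Gamma (\<beta>+\<gamma>)) * (ennreal (exp (- x*t) * t powr (a+\<gamma>-1) * (1+t) powr (a-\<beta>+1-(a+\<gamma>)-1)) * indicator {0<..} t) \<partial>lborel)"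
  proof (intro nn_integral_cong)
    fix t :: real
    show "(\<integral>\<^sup>+b. \<Psi> b t \<partial>lborel) = ennreal (K * Gamma (\<beta>+\<gamma>)) * (ennreal (exp (- x*t) * t powr (a+\<gamma>-1) * (1+t) powr (a-\<beta>+1-(a+\<gamma>)-1)) * indicator {0<..} t)"
    proof (cases "0 < t")
      case t: True
      have "(\<integral>\<^sup>+b. \<Psi> b t \<partial>lborel) = ennreal K * ennreal (P t) * (\<integral>\<^sup>+b. ennreal (Q t b) * indicator {0<..} b \<partial>lborel)"
        unfolding \<Psi>_def using t
        apply (subst nn_integral_cmult, simp add: Q_def)
        apply (simp add: mult.assoc indicator_def)
        done
      also have "(\<integral>\<^sup>+b. ennreal (Q t b) * indicator {0<..} b \<partial>lborel) = ennreal (Gamma (\<beta>+\<gamma>) / (1+t) powr (\<beta>+\<gamma>))"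
        unfolding Q_def using gamma_scaled[of "\<beta>+\<gamma>" "1+t"] be ga t by simp
      also have "ennreal K * ennreal (P t) * ennreal (Gamma (\<beta>+\<gamma>) / (1+t) powr (\<beta>+\<gamma>))
         = ennreal (K * Gamma (\<beta>+\<gamma>) * (exp (- x*t) * t powr (a+\<gamma>-1) * (1+t) powr (a-\<beta>+1-(a+\<gamma>)-1)))"
      proof -
        have "a-\<beta>+1-(a+\<gamma>)-1 = -(\<beta>+\<gamma>)" by simp
        then have "(1+t) powr (a-\<beta>+1-(a+\<gamma>)-1) = 1 / (1+t) powr (\<beta>+\<gamma>)"
          by (simp only: powr_minus_divide)
        moreover have "0 \<le> P t" "0 \<le> Gamma (\<beta>+\<gamma>) / (1+t) powr (\<beta>+\<gamma>)"
          using t be ga by (auto simp: P_def less_imp_le)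
        ultimately have n1: "0 \<le> P t" "0 \<le> Gamma (\<beta>+\<gamma>) / (1+t) powr (\<beta>+\<gamma>)"
          and hp: "(1+t) powr (a-\<beta>+1-(a+\<gamma>)-1) = 1 / (1+t) powr (\<beta>+\<gamma>)" by auto
        have r1: "K * P t * (Gamma (\<beta>+\<gamma>) / (1+t) powr (\<beta>+\<gamma>))
           = K * Gamma (\<beta>+\<gamma>) * (exp (- x*t) * t powr (a+\<gamma>-1) * (1+t) powr (a-\<beta>+1-(a+\<gamma>)-1))"
          unfolding hp P_def by simp
        have r2: "ennreal K * ennreal (P t) * ennreal (Gamma (\<beta>+\<gamma>) / (1+t) powr (\<beta>+\<gamma>))
           = ennreal (K * P t * (Gamma (\<beta>+\<gamma>) / (1+t) powr (\<beta>+\<gamma>)))"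
          by (simp only: ennreal_mult[OF mult_nonneg_nonneg[OF Kn n1(1)] n1(2)] ennreal_mult[OF Kn n1(1)])
        show ?thesis unfolding r2 r1 ..
      qed
      finally have "(\<integral>\<^sup>+b. \<Psi> b t \<partial>lborel) = ennreal (K * Gamma (\<beta>+\<gamma>) * (exp (- x*t) * t powr (a+\<gamma>-1) * (1+t) powr (a-\<beta>+1-(a+\<gamma>)-1)))" .
      also have "\<dots> = ennreal (K * Gamma (\<beta>+\<gamma>)) * ennreal (exp (- x*t) * t powr (a+\<gamma>-1) * (1+t) powr (a-\<beta>+1-(a+\<gamma>)-1))"
        by (rule ennreal_mult') (use Kn be ga in simp)
      finally show ?thesis using t by (simp add: indicator_def)
    next
      case False then show ?thesis by (simp add: \<Psi>_def)
    qed
  qed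
  also have "\<dots> = ennreal (K * Gamma (\<beta>+\<gamma>)) * ennreal (LBINT t:{0<..}. exp (- x*t) * t powr (a+\<gamma>-1) * (1+t) powr (a-\<beta>+1-(a+\<gamma>)-1))"
    using LB[OF x, of "a+\<gamma>" "a-\<beta>+1-(a+\<gamma>)-1"] a ga be by (simp add: nn_integral_cmult)
  also have "\<dots> = ennreal (fS a \<beta> \<gamma> x)"
  proof -
    have nz: "Gamma (a+\<gamma>) \<noteq> 0" using Gamma_real_pos[of "a+\<gamma>"] a ga by linarith
    have e1: "K * Gamma (\<beta>+\<gamma>) * (LBINT t:{0<..}. exp (- x*t) * t powr (a+\<gamma>-1) * (1+t) powr (a-\<beta>+1-(a+\<gamma>)-1))
       = fS a \<beta> \<gamma> x"
      using x nz unfolding fS_def kummerU_def K_def by (simp add: field_simps)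
    have e2: "0 \<le> K * Gamma (\<beta>+\<gamma>)" using Kn be ga by simp
    show ?thesis by (simp only: ennreal_mult'[OF e2, symmetric] e1)
  qed
  finally show ?thesis unfolding \<Phi>_def .
qed


lemma key:
  fixes a \<beta> \<gamma> :: real
  assumes a: "0 < a" and be: "0 < \<beta>" and ga: "0 < \<gamma>" and A[measurable]: "A \<in> sets borel"
  shows "(\<integral>\<^sup>+b. \<integral>\<^sup>+c. \<integral>\<^sup>+y. ennreal (gamma_density a y) * (ennreal (gamma_density \<beta> b) * ennreal (gamma_density \<gamma> c)) * indicator A (y * (b/c)) \<partial>lborel \<partial>lborel \<partial>lborel)
       = (\<integral>\<^sup>+x. ennreal (fS a \<beta> \<gamma> x) * indicator A x \<partial>lborel)"
proof -
  define F where "F y b c = ennreal (gamma_density a y) * (ennreal (gamma_density \<beta> b) * ennreal (gamma_density \<gamma> c)) * indicator A (y * (b/c))" for y b c :: real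
  define \<Phi> where "\<Phi> b c x = c/b * gamma_density a (c*x/b) * gamma_density \<beta> b * gamma_density \<gamma> c" for b c x :: real
  have step3: "(\<integral>\<^sup>+y. F y b c \<partial>lborel) = (\<integral>\<^sup>+x. ennreal (\<Phi> b c x) * indicator A x \<partial>lborel)" for b c
  proof (cases "0 < b \<and> 0 < c")
    case True
    then have b: "0 < b" and c: "0 < c" by auto
    have "(\<integral>\<^sup>+y. F y b c \<partial>lborel) = ennreal (c/b) * (\<integral>\<^sup>+x. F ((c/b)*x) b c \<partial>lborel)"
      using nn_integral_real_affine[of "\<lambda>y. F y b c" "c/b" 0] b c by (simp add: F_def)
    also have "\<dots> = (\<integral>\<^sup>+x. ennreal (c/b) * F ((c/b)*x) b c \<partial>lborel)"
      by (rule nn_integral_cmult[symmetric]) (simp add: F_def)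
    also have "\<dots> = (\<integral>\<^sup>+x. ennreal (\<Phi> b c x) * indicator A x \<partial>lborel)"
    proof (intro nn_integral_cong)
      fix x :: real
      have i: "(c/b)*x*(b/c) = x" using b c by (simp add: field_simps)
      have j: "c/b*x = c*x/b" by simp
      have k: "b/c * (c*x/b) = x" using b c by (simp add: field_simps)
      have n: "0 \<le> gamma_density a (c*x/b)" "0 \<le> gamma_density \<beta> b" "0 \<le> gamma_density \<gamma> c" "0 \<le> c/b"
        using a be ga b c by (auto intro!: gd_nonneg)
      show "ennreal (c/b) * F ((c/b)*x) b c = ennreal (\<Phi> b c x) * indicator A x"
        unfolding F_def \<Phi>_def i j using n
        by (simp add: ennreal_mult mult_ac k del: times_divide_eq_left times_divide_eq_right)
    qed
    finally show ?thesis .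
  next
    case False
    then have "gamma_density \<beta> b = 0 \<or> gamma_density \<gamma> c = 0"
      by (auto simp: gamma_density_def)
    then show ?thesis by (auto simp: F_def \<Phi>_def)
  qed
  have "(\<integral>\<^sup>+b. \<integral>\<^sup>+c. \<integral>\<^sup>+y. F y b c \<partial>lborel \<partial>lborel \<partial>lborel) = (\<integral>\<^sup>+b. \<integral>\<^sup>+c. \<integral>\<^sup>+x. ennreal (\<Phi> b c x) * indicator A x \<partial>lborel \<partial>lborel \<partial>lborel)"
    by (simp add: step3)
  also have "\<dots> = (\<integral>\<^sup>+b. \<integral>\<^sup>+x. \<integral>\<^sup>+c. ennreal (\<Phi> b c x) * indicator A x \<partial>lborel \<partial>lborel \<partial>lborel)"
    by (intro nn_integral_cong lborel_pair.Fubini') (unfold \<Phi>_def, measurable)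
  also have "\<dots> = (\<integral>\<^sup>+x. \<integral>\<^sup>+b. \<integral>\<^sup>+c. ennreal (\<Phi> b c x) * indicator A x \<partial>lborel \<partial>lborel \<partial>lborel)"
    by (rule lborel_pair.Fubini') (unfold \<Phi>_def, measurable)
  also have "\<dots> = (\<integral>\<^sup>+x. ennreal (fS a \<beta> \<gamma> x) * indicator A x \<partial>lborel)"
  proof (intro nn_integral_cong)
    fix x :: real
    have "(\<integral>\<^sup>+b. \<integral>\<^sup>+c. ennreal (\<Phi> b c x) * indicator A x \<partial>lborel \<partial>lborel)
        = (\<integral>\<^sup>+b. (\<integral>\<^sup>+c. ennreal (\<Phi> b c x) \<partial>lborel) * indicator A x \<partial>lborel)"
      by (intro nn_integral_cong nn_integral_multc) (unfold \<Phi>_def, measurable)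
    also have "\<dots> = (\<integral>\<^sup>+b. \<integral>\<^sup>+c. ennreal (\<Phi> b c x) \<partial>lborel \<partial>lborel) * indicator A x"
      by (rule nn_integral_multc) (unfold \<Phi>_def, measurable)
    also have "(\<integral>\<^sup>+b. \<integral>\<^sup>+c. ennreal (\<Phi> b c x) \<partial>lborel \<partial>lborel) = ennreal (fS a \<beta> \<gamma> x)"
      unfolding \<Phi>_def by (rule kx[OF a be ga])
    finally show "(\<integral>\<^sup>+b. \<integral>\<^sup>+c. ennreal (\<Phi> b c x) * indicator A x \<partial>lborel \<partial>lborel) = ennreal (fS a \<beta> \<gamma> x) * indicator A x" .
  qed
  finally show ?thesis unfolding F_def .
qed


lemma (in prob_space) gamma_distributed_sum:
  fixes X :: "nat \<Rightarrow> 'a \<Rightarrow> real"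
  assumes finI: "finite I" and ne: "I \<noteq> {}"
  assumes pos: "\<And>i. i \<in> I \<Longrightarrow> 0 < \<alpha> i"
  assumes dX: "\<And>i. i \<in> I \<Longrightarrow> distributed M lborel (X i) (\<lambda>x. ennreal (gamma_density (\<alpha> i) x))"
  assumes ind: "indep_vars (\<lambda>i. borel) X I"
  shows "distributed M lborel (\<lambda>x. \<Sum>i\<in>I. X i x) (\<lambda>x. ennreal (gamma_density (\<Sum>i\<in>I. \<alpha> i) x))"
  using finI ne pos dX ind
proof (induct rule: finite_ne_induct)
  case (singleton i) then show ?case by auto
next
  case (insert i I)
  have p1: "0 < \<alpha> i" using insert by auto
  have p2: "0 < (\<Sum>j\<in>I. \<alpha> j)" using insert by (intro sum_pos) auto
  have "distributed M lborel (\<lambda>x. X i x + (\<Sum>j\<in>I. X j x))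
      (\<lambda>x. \<integral>\<^sup>+y. ennreal (gamma_density (\<alpha> i) (x - y)) * ennreal (gamma_density (\<Sum>j\<in>I. \<alpha> j) y) \<partial>lborel)"
    using insert by (intro distributed_convolution indep_vars_sum) (auto intro!: indep_vars_subset)
  also have "(\<lambda>x. \<integral>\<^sup>+y. ennreal (gamma_density (\<alpha> i) (x - y)) * ennreal (gamma_density (\<Sum>j\<in>I. \<alpha> j) y) \<partial>lborel)
     = (\<lambda>x. ennreal (gamma_density (\<alpha> i + (\<Sum>j\<in>I. \<alpha> j)) x))"
    by (rule gamma_conv[OF p1 p2])
  also have "(\<lambda>x. X i x + (\<Sum>j\<in>I. X j x)) = (\<lambda>x. \<Sum>j\<in>insert i I. X j x)"
    using insert by auto
  also have "\<alpha> i + (\<Sum>j\<in>I. \<alpha> j) = (\<Sum>j\<in>insert i I. \<alpha> j)"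
    using insert by auto
  finally show ?case .
qed


theorem theorem10:
  fixes M :: "'w measure" and n :: nat and \<alpha> :: "nat \<Rightarrow> real" and \<beta> \<gamma> :: real
    and G :: "nat \<Rightarrow> 'w \<Rightarrow> real" and Gb Gc :: "'w \<Rightarrow> real"
  assumes "prob_space M" and "1 \<le> n"
    and "\<forall>i<n. 0 < \<alpha> i" and "0 < \<beta>" and "0 < \<gamma>"
    and "\<forall>i<n. distributed M lborel (G i) (\<lambda>x. ennreal (gamma_density (\<alpha> i) x))"
    and "distributed M lborel Gb (\<lambda>x. ennreal (gamma_density \<beta> x))"
    and "distributed M lborel Gc (\<lambda>x. ennreal (gamma_density \<gamma> x))"
    and "prob_space.indep_vars M (\<lambda>_. borel)
           (\<lambda>i. if i < n then G i else if i = n then Gb else Gc) {0..<n+2}"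
  defines "\<alpha>t \<equiv> (\<Sum>j<n. \<alpha> j)"
    and "S \<equiv> (\<lambda>w. \<Sum>i<n. G i w * (Gb w / Gc w))"
  shows "distr M borel S =
           distr (density lborel (\<lambda>g. ennreal (gamma_density \<alpha>t g)) \<Otimes>\<^sub>M distr M borel (\<lambda>w. Gb w / Gc w))
                 borel (\<lambda>(g, h). g * h)
         \<and> distributed M lborel S
             (\<lambda>x. ennreal (if 0 < x then
                Gamma (\<alpha>t + \<gamma>) * Gamma (\<beta> + \<gamma>) / (Gamma \<alpha>t * Gamma \<beta> * Gamma \<gamma>)
                * x powr (\<alpha>t - 1) * kummerU (\<alpha>t + \<gamma>) (\<alpha>t - \<beta> + 1) x
              else 0))"
proof -
  interpret P: prob_space M by fact
  note apos = assms(3) and be = assms(4) and ga = assms(5) and dG = assms(6)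
    and dB = assms(7) and dC = assms(8) and ind = assms(9)
  define X where "X = (\<lambda>i. if i < n then G i else if i = n then Gb else Gc)"
  have ind: "P.indep_vars (\<lambda>_. borel) X {0..<n+2}" using ind unfolding X_def .
  define Y where "Y w = (\<Sum>i<n. G i w)" for w
  define H where "H w = Gb w / Gc w" for w
  have SY: "S = (\<lambda>w. Y w * H w)"
    unfolding S_def Y_def H_def by (simp only: sum_distrib_right)
  have "0 \<in> {..<n}" using assms(2) by simp
  then have ne: "{..<n} \<noteq> {}" by blast
  have atpos: "0 < \<alpha>t"
  proof -
    show ?thesis unfolding \<alpha>t_def using apos ne by (intro sum_pos) auto
  qed
  have Ydist: "distributed M lborel Y (\<lambda>x. ennreal (gamma_density \<alpha>t x))"
  proof -
    have "P.indep_vars (\<lambda>_. borel) X {..<n}"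
      by (rule P.indep_vars_subset[OF ind]) auto
    then have "P.indep_vars (\<lambda>_. borel) G {..<n}"
      by (rule iffD1[OF P.indep_vars_cong, rotated 3]) (auto simp: X_def)
    then show ?thesis unfolding Y_def \<alpha>t_def
      using ne apos dG by (intro P.gamma_distributed_sum) auto
  qed
  have Ym[measurable]: "Y \<in> borel_measurable M" using distributed_measurable[OF Ydist] by simp
  have Bm[measurable]: "Gb \<in> borel_measurable M" using distributed_measurable[OF dB] by simp
  have Cm[measurable]: "Gc \<in> borel_measurable M" using distributed_measurable[OF dC] by simp
  have indA: "P.indep_var (Pi\<^sub>M {0..<n} (\<lambda>_. borel)) (\<lambda>\<omega>. restrict (\<lambda>i. X i \<omega>) {0..<n})
                         (Pi\<^sub>M {n, n+1} (\<lambda>_. borel)) (\<lambda>\<omega>. restrict (\<lambda>i. X i \<omega>) {n, n+1})"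
    by (rule P.indep_var_restrict[OF ind]) auto
  have indYH: "P.indep_var borel Y borel H"
  proof -
    have "P.indep_var borel ((\<lambda>f. \<Sum>i<n. f i) \<circ> (\<lambda>\<omega>. restrict (\<lambda>i. X i \<omega>) {0..<n}))
            borel ((\<lambda>f. f n / f (n+1)) \<circ> (\<lambda>\<omega>. restrict (\<lambda>i. X i \<omega>) {n, n+1}))"
      by (rule P.indep_var_compose[OF indA]) measurable
    also have "(\<lambda>f. \<Sum>i<n. f i) \<circ> (\<lambda>\<omega>. restrict (\<lambda>i. X i \<omega>) {0..<n}) = Y"
      by (auto simp: fun_eq_iff Y_def X_def intro!: sum.cong)
    also have "(\<lambda>f. f n / f (n+1)) \<circ> (\<lambda>\<omega>. restrict (\<lambda>i. X i \<omega>) {n, n+1}) = H"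
      by (auto simp: fun_eq_iff X_def H_def)
    finally show ?thesis .
  qed
  have indBC: "P.indep_var lborel Gb lborel Gc"
  proof -
    have i2: "P.indep_var (Pi\<^sub>M {n} (\<lambda>_. borel)) (\<lambda>\<omega>. restrict (\<lambda>i. X i \<omega>) {n})
                         (Pi\<^sub>M {n+1} (\<lambda>_. borel)) (\<lambda>\<omega>. restrict (\<lambda>i. X i \<omega>) {n+1})"
      by (rule P.indep_var_restrict[OF ind]) auto
    have "P.indep_var lborel ((\<lambda>f. f n) \<circ> (\<lambda>\<omega>. restrict (\<lambda>i. X i \<omega>) {n}))
            lborel ((\<lambda>f. f (n+1)) \<circ> (\<lambda>\<omega>. restrict (\<lambda>i. X i \<omega>) {n+1}))"
      by (rule P.indep_var_compose[OF i2]) measurable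
    also have "(\<lambda>f. f n) \<circ> (\<lambda>\<omega>. restrict (\<lambda>i. X i \<omega>) {n}) = Gb"
      by (auto simp: fun_eq_iff X_def)
    also have "(\<lambda>f. f (n+1)) \<circ> (\<lambda>\<omega>. restrict (\<lambda>i. X i \<omega>) {n+1}) = Gc"
      by (auto simp: fun_eq_iff X_def)
    finally show ?thesis .
  qed
  have Hm[measurable]: "H \<in> borel_measurable M" unfolding H_def by measurable
  have Sm[measurable]: "S \<in> borel_measurable M" unfolding SY by measurable
  define fa where "fa x = ennreal (gamma_density \<alpha>t x)" for x
  have DY: "distr M borel Y = density lborel fa"
  proof -
    have "distr M borel Y = distr M lborel Y" by (rule distr_cong) auto
    also have "\<dots> = density lborel fa" using distributed_distr_eq_density[OF Ydist] by (simp add: fa_def[abs_def])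
    finally show ?thesis .
  qed
  have jointYH: "distr M borel Y \<Otimes>\<^sub>M distr M borel H = distr M (borel \<Otimes>\<^sub>M borel) (\<lambda>w. (Y w, H w))"
    using indYH by (simp add: P.indep_var_distribution_eq)
  have conj1: "distr M borel S = distr (density lborel fa \<Otimes>\<^sub>M distr M borel H) borel (\<lambda>(g, h). g * h)"
  proof -
    have "distr M borel S = distr (distr M (borel \<Otimes>\<^sub>M borel) (\<lambda>w. (Y w, H w))) borel (\<lambda>(g, h). g * h)"
      by (subst distr_distr) (auto simp: SY comp_def)
    also have "\<dots> = distr (density lborel fa \<Otimes>\<^sub>M distr M borel H) borel (\<lambda>(g, h). g * h)"
      unfolding jointYH[symmetric] DY ..
    finally show ?thesis .
  qed
  have BC: "distributed M (lborel \<Otimes>\<^sub>M lborel) (\<lambda>w. (Gb w, Gc w))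
      (\<lambda>(b, c). ennreal (gamma_density \<beta> b) * ennreal (gamma_density \<gamma> c))"
    by (rule P.distributed_joint_indep[OF lborel.sigma_finite_measure_axioms lborel.sigma_finite_measure_axioms dB dC indBC])
  have fSm: "(\<lambda>x. ennreal (fS \<alpha>t \<beta> \<gamma> x)) \<in> borel_measurable borel"
  proof -
    have "(\<lambda>x. ennreal (fS \<alpha>t \<beta> \<gamma> x)) = (\<lambda>x. \<integral>\<^sup>+b. \<integral>\<^sup>+c. ennreal (c/b * gamma_density \<alpha>t (c*x/b) * gamma_density \<beta> b * gamma_density \<gamma> c) \<partial>lborel \<partial>lborel)"
      using kx[OF atpos be ga] by simp
    also have "\<dots> \<in> borel_measurable borel" by measurable
    finally show ?thesis .
  qed
  interpret DYp: prob_space "distr M borel Y" by (rule P.prob_space_distr) simp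
  interpret DHp: prob_space "distr M borel H" by (rule P.prob_space_distr) simp
  interpret PS: pair_sigma_finite "distr M borel Y" "distr M borel H" ..
  have dens: "distr M lborel S = density lborel (\<lambda>x. ennreal (fS \<alpha>t \<beta> \<gamma> x))"
  proof (rule measure_eqI)
    fix A assume "A \<in> sets (distr M lborel S)"
    then have A[measurable]: "A \<in> sets borel" by simp
    define F where "F y b c = ennreal (gamma_density \<alpha>t y) * (ennreal (gamma_density \<beta> b) * ennreal (gamma_density \<gamma> c)) * indicator A (y * (b/c))" for y b c :: real
    have "emeasure (distr M lborel S) A = (\<integral>\<^sup>+w. indicator A (Y w * H w) \<partial>M)"
      by (subst emeasure_distr) (auto simp: SY intro!: nn_integral_indicator[symmetric, THEN trans] nn_integral_cong simp: indicator_def)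
    also have "\<dots> = (\<integral>\<^sup>+p. indicator A (fst p * snd p) \<partial>distr M (borel \<Otimes>\<^sub>M borel) (\<lambda>w. (Y w, H w)))"
      by (subst nn_integral_distr) auto
    also have "\<dots> = (\<integral>\<^sup>+p. indicator A (fst p * snd p) \<partial>(distr M borel Y \<Otimes>\<^sub>M distr M borel H))"
      unfolding jointYH ..
    also have "\<dots> = (\<integral>\<^sup>+h. \<integral>\<^sup>+y. indicator A (y * h) \<partial>distr M borel Y \<partial>distr M borel H)"
      by (subst PS.nn_integral_snd[symmetric]) auto
    also have "\<dots> = (\<integral>\<^sup>+h. \<integral>\<^sup>+y. fa y * indicator A (y * h) \<partial>lborel \<partial>distr M borel H)"
      unfolding DY
      apply (intro nn_integral_cong)
      apply (subst nn_integral_density)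
        apply (unfold fa_def, measurable)
      done
    also have "\<dots> = (\<integral>\<^sup>+w. \<integral>\<^sup>+y. fa y * indicator A (y * (Gb w / Gc w)) \<partial>lborel \<partial>M)"
      by (subst nn_integral_distr) (auto simp: H_def fa_def)
    also have "\<dots> = (\<integral>\<^sup>+q. (\<lambda>(b, c). ennreal (gamma_density \<beta> b) * ennreal (gamma_density \<gamma> c)) q
                   * (\<lambda>(b,c). \<integral>\<^sup>+y. fa y * indicator A (y * (b / c)) \<partial>lborel) q \<partial>(lborel \<Otimes>\<^sub>M lborel))"
      by (subst distributed_nn_integral[OF BC]) (auto simp: fa_def)
    also have "\<dots> = (\<integral>\<^sup>+b. \<integral>\<^sup>+c. ennreal (gamma_density \<beta> b) * ennreal (gamma_density \<gamma> c)
                   * (\<integral>\<^sup>+y. fa y * indicator A (y * (b / c)) \<partial>lborel) \<partial>lborel \<partial>lborel)"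
      by (subst lborel.nn_integral_fst[symmetric]) (auto simp: fa_def)
    also have "\<dots> = (\<integral>\<^sup>+b. \<integral>\<^sup>+c. \<integral>\<^sup>+y. F y b c \<partial>lborel \<partial>lborel \<partial>lborel)"
      by (intro nn_integral_cong, subst nn_integral_cmult[symmetric]) (auto simp: fa_def F_def mult_ac)
    also have "\<dots> = (\<integral>\<^sup>+x. ennreal (fS \<alpha>t \<beta> \<gamma> x) * indicator A x \<partial>lborel)"
      unfolding F_def by (rule key[OF atpos be ga A])
    also have "\<dots> = emeasure (density lborel (\<lambda>x. ennreal (fS \<alpha>t \<beta> \<gamma> x))) A"
      using fSm by (simp add: emeasure_density)
    finally show "emeasure (distr M lborel S) A = emeasure (density lborel (\<lambda>x. ennreal (fS \<alpha>t \<beta> \<gamma> x))) A" .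
  qed simp
  have "distributed M lborel S (\<lambda>x. ennreal (fS \<alpha>t \<beta> \<gamma> x))"
    unfolding distributed_def using dens fSm by simp
  then show ?thesis using conj1 unfolding fS_def fa_def H_def[abs_def] by simp

qed


end
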